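(* Let $(f^I)$ be the left-invariant coframe on $\mathbf{Sp}(2,\mathbb{R})$ described in the context, let $g_K=2(f^4)^2-2f^3\odot f^5+f^2\odot f^6-4f^1\odot f^7$ and consider $$\phi=a(4f^{147}+f^{246}+2f^{345})+b(2f^{156}+f^{236}-4f^{137})+qf^{136}+h(f^{256}-4f^{157}-2f^{237})+pf^{257}$$ with real constants $a,b,q,h,p$. The general solution of the system $$(f_\mu\lrcorner\phi)\wedge(f_\nu\lrcorner\phi)\wedge\phi=3\,g_K(f_\mu,f_\nu)\,f^1\wedge f^2\wedge\cdots\wedge f^7,\qquad \mu,\nu=1,\dots,7,$$ is given by $a=\tfrac12$, $b=h=0$, $p=\frac1q$ (with $q\neq0$ free).
   Context: Realize $\mathfrak{sp}(2,\mathbb{R})$ as the real $4\times 4$ matrices $$E=\begin{pmatrix} a_5&a_7&a_9&2a_{10}\\ -a_4&a_6&a_8&a_9\\ a_2&a_3&-a_6&-a_7\\ -2a_1&a_2&a_4&-a_5\end{pmatrix}$$ with basis $E_I=\partial E/\partial a_I$. Put $f_1=E_1,\ f_2=E_3,\ f_3=E_4,\ f_4=E_6-E_5,\ f_5=E_7,\ f_6=E_8,\ f_7=E_{10},\ f_8=E_2,\ f_9=E_5+E_6,\ f_{10}=E_9$, regarded as left-invariant vector fields on $\mathbf{Sp}(2,\mathbb{R})$, with dual left-invariant 1-forms $(f^I)$, $f_I\lrcorner f^J=\delta^J_I$. Notation: $f^I\odot f^J=\tfrac12(f^I\otimes f^J+f^J\otimes f^I)$, $(f^I)^2=f^I\odot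 f^I$, $f^{\mu\nu\rho}=f^\mu\wedge f^\nu\wedge f^\rho$. $g_K$ is the restriction of the Killing form of $\mathbf{Sp}(2,\mathbb{R})$ to $f^8=f^9=f^{10}=0$. *)

theory Defs
  imports Complex_Main
begin

text \<open>Exterior forms on the 7-dimensional Lie algebra with coframe f^1..f^7.
A form is represented by its coefficient function: \<omega> K is the coefficient of
f^{i_1} \<and> ... \<and> f^{i_k}, where K = {i_1 < ... < i_k}.\<close>

type_synonym form = "nat set \<Rightarrow> real"

definition shuffle_sign :: "nat set \<Rightarrow> nat set \<Rightarrow> real" where
  "shuffle_sign I J = (-1) ^ card {(i, j). i \<in> I \<and> j \<in> J \<and> j < i}"

text \<open>Wedge product: f^I \<and> f^J = shuffle_sign I J * f^(I \<union> J) for disjoint I, J.\<close>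
definition wedge :: "form \<Rightarrow> form \<Rightarrow> form" where
  "wedge \<alpha> \<beta> = (\<lambda>K. \<Sum>I\<in>Pow K. shuffle_sign I (K - I) * \<alpha> I * \<beta> (K - I))"

definition interior :: "nat \<Rightarrow> form \<Rightarrow> form" where
  "interior \<mu> \<alpha> = (\<lambda>J. if \<mu> \<in> J then 0
      else (-1) ^ card {j \<in> J. j < \<mu>} * \<alpha> (insert \<mu> J))"

definition basis_form :: "nat set \<Rightarrow> form" where
  "basis_form S = (\<lambda>K. if K = S then 1 else 0)"

definition form_add :: "form \<Rightarrow> form \<Rightarrow> form" where
  "form_add \<alpha> \<beta> = (\<lambda>K. \<alpha> K + \<beta> K)"

definition form_scale :: "real \<Rightarrow> form \<Rightarrow> form" where
  "form_scale c \<alpha> = (\<lambda>K. c * \<alpha> K)"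

definition phi :: "real \<Rightarrow> real \<Rightarrow> real \<Rightarrow> real \<Rightarrow> real \<Rightarrow> form" where
  "phi a b q h p = (\<lambda>K.
       a * (4 * basis_form {1,4,7} K + basis_form {2,4,6} K + 2 * basis_form {3,4,5} K)
     + b * (2 * basis_form {1,5,6} K + basis_form {2,3,6} K - 4 * basis_form {1,3,7} K)
     + q * basis_form {1,3,6} K
     + h * (basis_form {2,5,6} K - 4 * basis_form {1,5,7} K - 2 * basis_form {2,3,7} K)
     + p * basis_form {2,5,7} K)"

definition sym_prod :: "nat \<Rightarrow> nat \<Rightarrow> nat \<Rightarrow> nat \<Rightarrow> real" where
  "sym_prod i j \<mu> \<nu> = (1/2) * ((if i = \<mu> \<and> j = \<nu> then 1 else 0) + (if j = \<mu> \<and> i = \<nu> then 1 else 0))"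

definition gK :: "nat \<Rightarrow> nat \<Rightarrow> real" where
  "gK \<mu> \<nu> = 2 * sym_prod 4 4 \<mu> \<nu> - 2 * sym_prod 3 5 \<mu> \<nu> + sym_prod 2 6 \<mu> \<nu>
             - 4 * sym_prod 1 7 \<mu> \<nu>"

definition vol7 :: form where
  "vol7 = basis_form {1..7}"

end

theory Submission imports Defs begin

definition lf :: "(real \<times> nat list) list \<Rightarrow> form" where
  "lf xs = (\<lambda>K. sum_list (map (\<lambda>(c,s). c * basis_form (set s) K) xs))"

definition sgnl :: "nat list \<Rightarrow> nat list \<Rightarrow> real" where
  "sgnl s t = (-1) ^ length (filter (\<lambda>(i,j). j < i) (List.product s t))"

lemma shuffle_sign_list:
  assumes "distinct s" "distinct t"
  shows "shuffle_sign (set s) (set t) = sgnl s t"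
proof -
  have "{(i, j). i \<in> set s \<and> j \<in> set t \<and> j < i} = set (filter (\<lambda>(i,j). j < i) (List.product s t))"
    by auto
  moreover have "distinct (filter (\<lambda>(i,j). j < i) (List.product s t))"
    using assms by (simp add: distinct_product)
  ultimately show ?thesis unfolding shuffle_sign_def sgnl_def
    by (metis (no_types, lifting) distinct_card)
qed

lemma lf_Nil: "lf [] = (\<lambda>K. 0)" by (simp add: lf_def)
lemma lf_Cons: "lf ((c,s)#xs) = (\<lambda>K. c * basis_form (set s) K + lf xs K)"
  by (simp add: lf_def)

definition intl :: "nat \<Rightarrow> (real \<times> nat list) list \<Rightarrow> (real \<times> nat list) list" where
  "intl m xs = concat (map (\<lambda>(c,s). if m \<in> set s then [((-1)^length (filter (\<lambda>j. j<m) s) * c, remove1 m s)] else []) xs)"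

lemma interior_basis:
  assumes "distinct s"
  shows "interior m (basis_form (set s)) J =
     (if m \<in> set s then (-1)^length (filter (\<lambda>j. j<m) s) * basis_form (set (remove1 m s)) J else 0)"
proof (cases "m \<in> J")
  case True
  then show ?thesis using assms by (auto simp: interior_def basis_form_def)
next
  case False
  show ?thesis
  proof (cases "m \<in> set s \<and> set s - {m} = J")
    case True
    then have "{j \<in> J. j < m} = set (filter (\<lambda>j. j<m) s)" using False by auto
    then have "card {j \<in> J. j < m} = length (filter (\<lambda>j. j<m) s)"
      using assms by (metis distinct_card distinct_filter)
    moreover have "insert m J = set s" using True by auto
    ultimately show ?thesis using True False assms by (simp add: interior_def basis_form_def)
  next
    case F2: False
    have "insert m J \<noteq> set s" using F2 False by auto
    moreover have "m \<in> set s \<Longrightarrow> set (remove1 m s) \<noteq> J" using F2 assms by auto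
    ultimately show ?thesis using False by (auto simp: interior_def basis_form_def)
  qed
qed

lemma interior_lf:
  "\<forall>x\<in>set xs. distinct (snd x) \<Longrightarrow> interior m (lf xs) = lf (intl m xs)"
proof (induction xs)
  case Nil
  then show ?case by (simp add: lf_def intl_def interior_def fun_eq_iff)
next
  case (Cons x xs)
  obtain c s where x: "x = (c,s)" by force
  have IH: "interior m (lf xs) = lf (intl m xs)" using Cons by auto
  have d: "distinct s" using Cons x by auto
  show ?case
  proof
    fix J
    have "interior m (lf (x#xs)) J = c * interior m (basis_form (set s)) J + interior m (lf xs) J"
      by (simp add: x lf_Cons interior_def algebra_simps)
    also have "\<dots> = c * interior m (basis_form (set s)) J + lf (intl m xs) J"
      by (simp add: IH)
    also have "\<dots> = lf (intl m (x#xs)) J"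
      by (simp add: interior_basis[OF d] x intl_def lf_def)
    finally show "interior m (lf (x#xs)) J = lf (intl m (x#xs)) J" .
  qed
qed

lemma wedge_basis:
  assumes "finite S" "finite T"
  shows "wedge (basis_form S) (basis_form T) K =
         (if S \<inter> T = {} \<and> K = S \<union> T then shuffle_sign S T else 0)"
proof (cases "finite K")
  case False
  then have "infinite (Pow K)" by simp
  moreover have "K \<noteq> S \<union> T" using False assms by auto
  ultimately show ?thesis by (simp add: wedge_def)
next
  case True
  have "wedge (basis_form S) (basis_form T) K =
        (\<Sum>I\<in>Pow K. if I = S then shuffle_sign S (K - S) * (if K - S = T then 1 else 0) else 0)"
    unfolding wedge_def basis_form_def by (rule sum.cong) auto
  also have "\<dots> = (if S \<in> Pow K then shuffle_sign S (K - S) * (if K - S = T then 1 else 0) else 0)"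
    using True by (simp add: sum.delta)
  also have "\<dots> = (if S \<inter> T = {} \<and> K = S \<union> T then shuffle_sign S T else 0)"
    by auto
  finally show ?thesis .
qed

lemma wedge_lin1: "wedge (\<lambda>K. c * \<alpha> K + \<beta> K) \<gamma> K = c * wedge \<alpha> \<gamma> K + wedge \<beta> \<gamma> K"
  by (simp add: wedge_def sum.distrib sum_distrib_left algebra_simps)
lemma wedge_lin2: "wedge \<gamma> (\<lambda>K. c * \<alpha> K + \<beta> K) K = c * wedge \<gamma> \<alpha> K + wedge \<gamma> \<beta> K"
  by (simp add: wedge_def sum.distrib sum_distrib_left algebra_simps)
lemma wedge_zero1: "wedge (\<lambda>K. 0) \<gamma> K = 0" by (simp add: wedge_def)
lemma wedge_zero2: "wedge \<gamma> (\<lambda>K. 0) K = 0" by (simp add: wedge_def)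

definition wl1 :: "real \<Rightarrow> nat list \<Rightarrow> (real \<times> nat list) list \<Rightarrow> (real \<times> nat list) list" where
  "wl1 c s ys = concat (map (\<lambda>(d,t). if set s \<inter> set t = {} then [(c*d*sgnl s t, sort (s@t))] else []) ys)"

definition wl :: "(real \<times> nat list) list \<Rightarrow> (real \<times> nat list) list \<Rightarrow> (real \<times> nat list) list" where
  "wl xs ys = concat (map (\<lambda>(c,s). wl1 c s ys) xs)"

lemma wedge_lf1:
  assumes "distinct s" "\<forall>y\<in>set ys. distinct (snd y)"
  shows "c * wedge (basis_form (set s)) (lf ys) K = lf (wl1 c s ys) K"
  using assms(2)
proof (induction ys)
  case Nil
  then show ?case by (simp add: lf_Nil wedge_zero2 wl1_def lf_def)
next
  case (Cons y ys)
  obtain d t where y: "y = (d,t)" by force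
  have dt: "distinct t" using Cons y by auto
  have "c * wedge (basis_form (set s)) (lf (y#ys)) K =
        c * d * wedge (basis_form (set s)) (basis_form (set t)) K + c * wedge (basis_form (set s)) (lf ys) K"
    by (simp only: y lf_Cons wedge_lin2) (simp add: algebra_simps)
  also have "\<dots> = c * d * wedge (basis_form (set s)) (basis_form (set t)) K + lf (wl1 c s ys) K"
    using Cons by simp
  also have "\<dots> = lf (wl1 c s (y#ys)) K"
    unfolding wedge_basis[OF finite_set finite_set] shuffle_sign_list[OF assms(1) dt]
    by (simp add: y wl1_def lf_def basis_form_def)
  finally show ?case .
qed

lemma wedge_lf:
  assumes "\<forall>x\<in>set xs. distinct (snd x)" "\<forall>y\<in>set ys. distinct (snd y)"
  shows "wedge (lf xs) (lf ys) = lf (wl xs ys)"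
proof
  fix K
  show "wedge (lf xs) (lf ys) K = lf (wl xs ys) K"
  using assms(1)
  proof (induction xs)
    case Nil
    then show ?case by (simp add: lf_Nil wedge_zero1 wl_def lf_def)
  next
    case (Cons x xs)
    obtain c s where x: "x = (c,s)" by force
    have ds: "distinct s" using Cons x by auto
    have "wedge (lf (x#xs)) (lf ys) K = c * wedge (basis_form (set s)) (lf ys) K + wedge (lf xs) (lf ys) K"
      by (simp add: x lf_Cons wedge_lin1)
    also have "\<dots> = lf (wl1 c s ys) K + lf (wl xs ys) K"
      using Cons wedge_lf1[OF ds assms(2)] by simp
    also have "\<dots> = lf (wl (x#xs) ys) K"
      by (simp add: x wl_def lf_def)
    finally show ?case .
  qed
qed

lemma lf_const:
  assumes "\<forall>x\<in>set xs. snd x = L"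
  shows "lf xs = form_scale (sum_list (map fst xs)) (basis_form (set L))"
  using assms
  by (induction xs) (auto simp: lf_def form_scale_def fun_eq_iff algebra_simps)

lemma scale_eq: "form_scale c (basis_form S) = form_scale d (basis_form S) \<longleftrightarrow> c = d"
  by (auto simp: form_scale_def basis_form_def fun_eq_iff dest: spec[of _ S])

definition phil :: "real \<Rightarrow> real \<Rightarrow> real \<Rightarrow> real \<Rightarrow> real \<Rightarrow> (real \<times> nat list) list" where
  "phil a b q h p = [(4*a,[1,4,7]), (a,[2,4,6]), (2*a,[3,4,5]), (2*b,[1,5,6]), (b,[2,3,6]), (-4*b,[1,3,7]),
     (q,[1,3,6]), (h,[2,5,6]), (-4*h,[1,5,7]), (-2*h,[2,3,7]), (p,[2,5,7])]"

lemma phi_lf: "phi a b q h p = lf (phil a b q h p)"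
  by (simp add: phi_def phil_def lf_def fun_eq_iff algebra_simps insert_commute)

lemma vol7_eq: "vol7 = basis_form (set [Suc 0,2,3,4,5,6,7])"
  unfolding vol7_def by (rule arg_cong[where f=basis_form]) auto

lemma key:
  "wedge (wedge (interior m (lf xs)) (interior n (lf xs))) (lf xs) =
   lf (wl (wl (intl m xs) (intl n xs)) xs)" if "\<forall>x\<in>set xs. distinct (snd x)"
     "\<forall>x\<in>set (wl (intl m xs) (intl n xs)). distinct (snd x)"
     "\<forall>x\<in>set (intl m xs). distinct (snd x)" "\<forall>x\<in>set (intl n xs). distinct (snd x)"
  using that by (simp add: interior_lf wedge_lf)

lemma eqv:
  assumes "\<forall>x\<in>set (phil a b q h p). distinct (snd x)"
     "\<forall>x\<in>set (wl (intl m (phil a b q h p)) (intl n (phil a b q h p))). distinct (snd x)"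
     "\<forall>x\<in>set (intl m (phil a b q h p)). distinct (snd x)"
     "\<forall>x\<in>set (intl n (phil a b q h p)). distinct (snd x)"
     "\<forall>x\<in>set (wl (wl (intl m (phil a b q h p)) (intl n (phil a b q h p))) (phil a b q h p)). snd x = [Suc 0,2,3,4,5,6,7]"
  shows "wedge (wedge (interior m (phi a b q h p)) (interior n (phi a b q h p))) (phi a b q h p)
   = form_scale (3 * gK m n) vol7 \<longleftrightarrow>
   sum_list (map fst (wl (wl (intl m (phil a b q h p)) (intl n (phil a b q h p))) (phil a b q h p))) = 3 * gK m n"
  unfolding phi_lf vol7_eq
  using assms
  by (simp only: key lf_const scale_eq)

lemma alg:
  fixes a b q h p :: real
  shows "(a*(a*(a*8)) = 1 \<and> b*(b*2) = h*q \<and> a*(p*(q*6)) + a*(b*(h*24)) = 3 \<and> -(a*(b*p)) = a*(h*(h*2)))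
    \<longleftrightarrow> (a = 1/2 \<and> b = 0 \<and> h = 0 \<and> q \<noteq> 0 \<and> p = 1 / q)"
proof
  assume H: "a*(a*(a*8)) = 1 \<and> b*(b*2) = h*q \<and> a*(p*(q*6)) + a*(b*(h*24)) = 3 \<and> -(a*(b*p)) = a*(h*(h*2))"
  have "(2*a - 1) * (4*a*a + 2*a + 1) = a*(a*(a*8)) - 1" by (simp add: algebra_simps)
  then have z: "(2*a - 1) * (4*a*a + 2*a + 1) = 0" using H by simp
  have "4*a*a + 2*a + 1 = (2*a+1/2)*(2*a+1/2) + 3/4" by (simp add: algebra_simps)
  moreover have "0 \<le> (2*a+1/2)*(2*a+1/2)" by simp
  ultimately have "4*a*a + 2*a + 1 \<noteq> 0" by linarith
  then have a: "a = 1/2" using z by simp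
  have e1: "b*b*2 = h*q" using H by (simp add: algebra_simps)
  have e2: "p*q + 4*b*h = 1" using H a by (simp add: algebra_simps)
  have e3: "b*p = -2*h*h" using H a by (simp add: algebra_simps)
  have "b*q = b*q*(p*q + 4*b*h)" using e2 by simp
  also have "\<dots> = q*q*(b*p) + 4*b*b*(h*q)" by (simp add: algebra_simps)
  also have "\<dots> = -2*(h*q)*(h*q) + 4*b*b*(h*q)" using e3 by (simp add: algebra_simps)
  also have "\<dots> = 0" using e1[symmetric] by (simp add: algebra_simps)
  finally have bq: "b*q = 0" .
  have b: "b = 0"
  proof (rule ccontr)
    assume "b \<noteq> 0"
    then have "q = 0" using bq by simp
    then show False using e1 \<open>b \<noteq> 0\<close> by simp
  qed
  have h: "h = 0" using e3 b by simp
  have pq: "p*q = 1" using e2 b by simp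
  then have qn: "q \<noteq> 0" by auto
  have "p = 1/q" using pq qn by (simp add: eq_divide_eq)
  then show "a = 1/2 \<and> b = 0 \<and> h = 0 \<and> q \<noteq> 0 \<and> p = 1 / q"
    using a b h qn by simp
next
  assume R: "a = 1/2 \<and> b = 0 \<and> h = 0 \<and> q \<noteq> 0 \<and> p = 1 / q"
  then have a: "a = 1/2" and b: "b = 0" and h: "h = 0" and q: "q \<noteq> 0" and p: "p = 1/q" by auto
  have "a*(p*(q*6)) = 3" using q unfolding a p by simp
  moreover have "a*(a*(a*8)) = 1" unfolding a by simp
  ultimately show "a*(a*(a*8)) = 1 \<and> b*(b*2) = h*q \<and> a*(p*(q*6)) + a*(b*(h*24)) = 3 \<and> -(a*(b*p)) = a*(h*(h*2))"
    unfolding b h by simp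
qed

theorem proposition4p3:
  fixes a b q h p :: real
  shows "(\<forall>\<mu>\<in>{1..7::nat}. \<forall>\<nu>\<in>{1..7::nat}.
            wedge (wedge (interior \<mu> (phi a b q h p)) (interior \<nu> (phi a b q h p))) (phi a b q h p)
            = form_scale (3 * gK \<mu> \<nu>) vol7)
         \<longleftrightarrow> (a = 1/2 \<and> b = 0 \<and> h = 0 \<and> q \<noteq> 0 \<and> p = 1 / q)"
proof -
  have e: "{1..7::nat} = {1,2,3,4,5,6,7}" by auto
  have C: "(\<forall>\<mu>\<in>{1..7::nat}. \<forall>\<nu>\<in>{1..7::nat}.
            wedge (wedge (interior \<mu> (phi a b q h p)) (interior \<nu> (phi a b q h p))) (phi a b q h p)
            = form_scale (3 * gK \<mu> \<nu>) vol7)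
     \<longleftrightarrow> (a*(a*(a*8)) = 1 \<and> b*(b*2) = h*q \<and> a*(p*(q*6)) + a*(b*(h*24)) = 3 \<and> -(a*(b*p)) = a*(h*(h*2)))"
    unfolding e
    apply (simp only: ball_simps)
    apply (simp add: eqv phil_def intl_def wl_def wl1_def)
    apply (simp add: sgnl_def gK_def sym_prod_def algebra_simps)
    apply auto
    done
  show ?thesis using C alg by blast
qed

end
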